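(* Let $n\geqslant 2$ and let $V_n$ be the set of integers $t$ such that there exist caterpillar trees $G$ (gene tree) and $S$ (species tree), both with $n$ leaves bijectively labeled by the same label set, for which $(G,S)$ has exactly $t$ coalescent histories. Then $$|V_n|\leqslant \frac12\left[\frac{1}{n}\binom{2n-2}{n-1}+\binom{n-1}{\lfloor (n-1)/2\rfloor}\right].$$
   Context: All trees are binary, rooted, leaf-labeled. A caterpillar tree is one in which some internal node is descended from all other internal nodes. For a caterpillar with $n$ leaves, internal nodes are numbered $1,\dots,n-1$ from the cherry (the internal node with exactly two descendant leaves) to the root, and internal edge $i$ is the edge immediately above node $i$, with an extra edge $n-1$ above the root. A coalescent history for a gene tree $G$ and species tree $S$ on the same label set is a map $h$ from internal nodes of $G$ to internal edges of $S$ such that (1) every label of a leaf below node $v$ of $G$ labels a leaf of $S$ below edge $h(v)$, and (2) if $v_2$ is descended from $v_1$ in $G$ then $h(v_2)$ is descended from $h(v_1)$ in $S$ (nodes and edges count as descended from themselves). *)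

theory Defs
  imports Complex_Main "HOL-Library.FuncSet"
begin

datatype tree = Leaf nat | Node tree tree

fun leaves :: "tree \<Rightarrow> nat list" where
  "leaves (Leaf a) = [a]"
| "leaves (Node l r) = leaves l @ leaves r"

text \<open>Nodes are addressed by their path from the root (False = left, True = right).\<close>
fun subtree_at :: "tree \<Rightarrow> bool list \<Rightarrow> tree option" where
  "subtree_at t [] = Some t"
| "subtree_at (Node l r) (False # p) = subtree_at l p"
| "subtree_at (Node l r) (True # p) = subtree_at r p"
| "subtree_at (Leaf a) (_ # _) = None"

definition internal_nodes :: "tree \<Rightarrow> bool list set" where
  "internal_nodes t = {p. \<exists>l r. subtree_at t p = Some (Node l r)}"

definition desc :: "bool list \<Rightarrow> bool list \<Rightarrow> bool" where
  "desc v u \<longleftrightarrow> (\<exists>w. v = u @ w)"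

definition clade :: "tree \<Rightarrow> bool list \<Rightarrow> nat set" where
  "clade t p = (case subtree_at t p of Some s \<Rightarrow> set (leaves s) | None \<Rightarrow> {})"

definition caterpillar :: "tree \<Rightarrow> bool" where
  "caterpillar t \<longleftrightarrow> (\<exists>c \<in> internal_nodes t. \<forall>u \<in> internal_nodes t. desc c u)"

text \<open>Internal edges of S are identified with the internal nodes immediately below
  them (the root carries the extra edge above it). A coalescent history maps internal
  nodes of G to internal edges of S.\<close>
definition coalescent_histories :: "tree \<Rightarrow> tree \<Rightarrow> (bool list \<Rightarrow> bool list) set" where
  "coalescent_histories G S =
    {h \<in> internal_nodes G \<rightarrow>\<^sub>E internal_nodes S.
       (\<forall>v \<in> internal_nodes G. clade G v \<subseteq> clade S (h v)) \<and>
       (\<forall>v1 \<in> internal_nodes G. \<forall>v2 \<in> internal_nodes G.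
           desc v2 v1 \<longrightarrow> desc (h v2) (h v1))}"

definition V :: "nat \<Rightarrow> nat set" where
  "V n = {t. \<exists>G S. caterpillar G \<and> caterpillar S \<and>
              distinct (leaves G) \<and> distinct (leaves S) \<and>
              length (leaves G) = n \<and> length (leaves S) = n \<and>
              set (leaves G) = set (leaves S) \<and>
              card (coalescent_histories G S) = t}"

end

theory Submission
  imports Defs
begin


lemma subtree_at_append:
  "subtree_at t (p @ q) = (case subtree_at t p of None \<Rightarrow> None | Some s \<Rightarrow> subtree_at s q)"
  by (induction t p rule: subtree_at.induct) auto

lemma subtree_at_Node_nonempty:
  "subtree_at s q = Some (Node l r) \<Longrightarrow> q \<noteq> [] \<Longrightarrow> \<exists>l' r'. s = Node l' r'"
  by (cases s; cases q) auto

lemma internal_prefix: "p @ q \<in> internal_nodes t \<Longrightarrow> p \<in> internal_nodes t"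
proof -
  assume "p @ q \<in> internal_nodes t"
  then obtain l r where lr: "subtree_at t (p @ q) = Some (Node l r)" by (auto simp: internal_nodes_def)
  then obtain s where s: "subtree_at t p = Some s" "subtree_at s q = Some (Node l r)"
    by (auto simp: subtree_at_append split: option.splits)
  show ?thesis
  proof (cases "q = []")
    case True then show ?thesis using s by (auto simp: internal_nodes_def)
  next
    case False
    then obtain l' r' where "s = Node l' r'" using subtree_at_Node_nonempty s(2) by blast
    then show ?thesis using s(1) by (auto simp: internal_nodes_def)
  qed
qed

lemma child_at: "subtree_at t p = Some (Node l r) \<Longrightarrow> subtree_at t (p @ [b]) = Some (if b then r else l)"
  by (simp add: subtree_at_append)

lemma leaves_sub: "subtree_at t p = Some s \<Longrightarrow> \<exists>xs ys. leaves t = xs @ leaves s @ ys"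
proof (induction t p rule: subtree_at.induct)
  case (2 l r p)
  then obtain xs ys where "leaves l = xs @ leaves s @ ys" by auto
  then show ?case by (rule_tac x=xs in exI, rule_tac x="ys @ leaves r" in exI) simp
next
  case (3 l r p)
  then obtain xs ys where "leaves r = xs @ leaves s @ ys" by auto
  then show ?case by (rule_tac x="leaves l @ xs" in exI, rule_tac x="ys" in exI) simp
qed (auto intro!: exI[where x="[]"])

lemma clade_append: "clade t (p @ q) \<subseteq> clade t p"
proof (cases "subtree_at t p")
  case None then show ?thesis by (simp add: clade_def subtree_at_append)
next
  case (Some s)
  show ?thesis
  proof (cases "subtree_at s q")
    case None then show ?thesis using Some by (simp add: clade_def subtree_at_append)
  next
    case (Some s')
    then obtain xs ys where "leaves s = xs @ leaves s' @ ys" using leaves_sub by blast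
    then show ?thesis using Some \<open>subtree_at t p = Some s\<close> by (auto simp: clade_def subtree_at_append)
  qed
qed

lemma clade_root: "clade t [] = set (leaves t)"
  by (simp add: clade_def)

lemma desc_take: "i \<le> j \<Longrightarrow> desc (take j c) (take i c)"
  unfolding desc_def by (metis append_take_drop_id min.absorb1 take_take)

lemma desc_len: "desc v u \<Longrightarrow> length u \<le> length v"
  unfolding desc_def by auto

locale cat =
  fixes t :: tree and c :: "bool list"
  assumes c_int: "c \<in> internal_nodes t"
    and c_all: "\<And>u. u \<in> internal_nodes t \<Longrightarrow> desc c u"
begin

lemma int_iff: "u \<in> internal_nodes t \<longleftrightarrow> (\<exists>i \<le> length c. u = take i c)"
proof
  assume "u \<in> internal_nodes t"
  then obtain w where "c = u @ w" using c_all unfolding desc_def by blast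
  then show "\<exists>i \<le> length c. u = take i c" by (rule_tac x="length u" in exI) simp
next
  assume "\<exists>i \<le> length c. u = take i c"
  then obtain i where "u = take i c" by blast
  then show "u \<in> internal_nodes t" using c_int internal_prefix by (metis append_take_drop_id)
qed

lemma take_int: "take i c \<in> internal_nodes t"
  using c_int internal_prefix by (metis append_take_drop_id)

lemma not_int_child: "i < length c \<Longrightarrow> take i c @ [\<not> c ! i] \<notin> internal_nodes t"
proof
  assume i: "i < length c" and h: "take i c @ [\<not> c ! i] \<in> internal_nodes t"
  then obtain w where "c = (take i c @ [\<not> c ! i]) @ w" using c_all unfolding desc_def by blast
  then have "c ! i = (take i c @ [\<not> c ! i] @ w) ! i" by simp
  also have "\<dots> = (\<not> c ! i)" using i by (simp add: nth_append)
  finally show False by simp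
qed

lemma not_int_end: "c @ [b] \<notin> internal_nodes t"
proof
  assume "c @ [b] \<in> internal_nodes t"
  then obtain w where "c = (c @ [b]) @ w" using c_all unfolding desc_def by blast
  then show False by (metis append_eq_append_conv2 append_self_conv append_is_Nil_conv not_Cons_self2 append.assoc)
qed

lemma not_int_Leaf: "subtree_at t p = Some s \<Longrightarrow> p \<notin> internal_nodes t \<Longrightarrow> length (leaves s) = 1"
  by (cases s) (auto simp: internal_nodes_def)

lemma spine_len: "d \<le> length c \<Longrightarrow> \<exists>s. subtree_at t (take d c) = Some s \<and> length (leaves s) = length c - d + 2"
proof (induction "length c - d" arbitrary: d)
  case 0
  then have d: "take d c = c" by simp
  obtain l r where lr: "subtree_at t c = Some (Node l r)" using c_int by (auto simp: internal_nodes_def)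
  have "length (leaves l) = 1" using child_at[OF lr, of False] not_int_end[of False] not_int_Leaf by simp
  moreover have "length (leaves r) = 1" using child_at[OF lr, of True] not_int_end[of True] not_int_Leaf by simp
  ultimately show ?case using lr d 0 by simp
next
  case (Suc m)
  then have dl: "d < length c" by simp
  obtain l r where lr: "subtree_at t (take d c) = Some (Node l r)" using take_int[of d] by (auto simp: internal_nodes_def)
  have tS: "take (Suc d) c = take d c @ [c ! d]" using dl by (simp add: take_Suc_conv_app_nth)
  have "m = length c - Suc d" using Suc.hyps(2) by simp
  then obtain s' where s': "subtree_at t (take (Suc d) c) = Some s'" "length (leaves s') = length c - Suc d + 2"
    using Suc.hyps(1)[of "Suc d"] dl by auto
  have o: "length (leaves (if \<not> c ! d then r else l)) = 1"
    using child_at[OF lr, of "\<not> c ! d"] not_int_child[OF dl] not_int_Leaf by blast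
  have "s' = (if c ! d then r else l)" using s'(1) child_at[OF lr, of "c ! d"] tS by simp
  then have "length (leaves (Node l r)) = length c - d + 2" using o s'(2) dl by (cases "c ! d") auto
  then show ?case using lr by blast
qed

lemma n_eq: "length (leaves t) = length c + 2"
  using spine_len[of 0] by simp

lemma card_clade:
  assumes dist: "distinct (leaves t)" and d: "d \<le> length c"
  shows "card (clade t (take d c)) = length (leaves t) - d"
proof -
  obtain s where s: "subtree_at t (take d c) = Some s" "length (leaves s) = length c - d + 2"
    using spine_len[OF d] by blast
  obtain xs ys where "leaves t = xs @ leaves s @ ys" using leaves_sub[OF s(1)] by blast
  then have "distinct (leaves s)" using dist by simp
  then have "card (clade t (take d c)) = length (leaves s)" using s(1) by (simp add: clade_def distinct_card)
  then show ?thesis using s(2) n_eq d by simp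
qed

end




definition Valid :: "nat \<Rightarrow> (nat \<Rightarrow> nat) set" where
  "Valid k = {a. (\<forall>d. k \<le> d \<longrightarrow> a d = 0) \<and> (\<forall>d. a d \<le> d) \<and>
                 (\<forall>d1 d2. d1 \<le> d2 \<longrightarrow> d2 < k \<longrightarrow> a d1 \<le> a d2)}"

definition Phi :: "nat \<Rightarrow> (nat \<Rightarrow> nat) \<Rightarrow> nat \<Rightarrow> nat" where
  "Phi k a e = (if e < k then card {d. d < k \<and> k \<le> a d + e} else 0)"

definition Fc :: "nat \<Rightarrow> (nat \<Rightarrow> nat) \<Rightarrow> nat" where
  "Fc k a = card {b \<in> Valid k. \<forall>d. b d \<le> a d}"

lemma finite_Valid: "finite (Valid k)"
proof -
  have "Valid k \<subseteq> {f. \<forall>x. (x \<in> {..<k} \<longrightarrow> f x \<in> {..<k}) \<and> (x \<notin> {..<k} \<longrightarrow> f x = 0)}"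
    unfolding Valid_def by (auto, meson le_less_trans)
  then show ?thesis using finite_subset finite_set_of_finite_funs[of "{..<k}" "{..<k}" 0] by blast
qed

lemma upset_card:
  assumes U: "U \<subseteq> {..<k}" and up: "\<And>d d'. d \<in> U \<Longrightarrow> d \<le> d' \<Longrightarrow> d' < k \<Longrightarrow> d' \<in> U"
    and m: "1 \<le> m" "m \<le> k"
  shows "m \<le> card U \<longleftrightarrow> k - m \<in> U"
proof
  assume "k - m \<in> U"
  then have "{k-m..<k} \<subseteq> U" using up by auto
  then have "card {k-m..<k} \<le> card U" using U by (meson card_mono finite_lessThan finite_subset)
  then show "m \<le> card U" using m by simp
next
  assume "m \<le> card U"
  show "k - m \<in> U"
  proof (rule ccontr)
    assume a: "k - m \<notin> U"
    have "U \<subseteq> {k-m+1..<k}"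
    proof
      fix d assume "d \<in> U"
      then have "d < k" using U by auto
      moreover have "\<not> d \<le> k - m" using a up \<open>d \<in> U\<close> m by (metis diff_less less_le_trans zero_less_one)
      ultimately show "d \<in> {k-m+1..<k}" by auto
    qed
    then have "card U \<le> card {k-m+1..<k}" by (intro card_mono) auto
    then show False using \<open>m \<le> card U\<close> m by simp
  qed
qed

lemma Valid_D:
  assumes "a \<in> Valid k"
  shows "\<And>d. k \<le> d \<Longrightarrow> a d = 0" "\<And>d. a d \<le> d" "\<And>d1 d2. d1 \<le> d2 \<Longrightarrow> d2 < k \<Longrightarrow> a d1 \<le> a d2"
  using assms unfolding Valid_def by auto

lemma Phi_le: "a \<in> Valid k \<Longrightarrow> Phi k a e \<le> e"
proof -
  assume v: "a \<in> Valid k"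
  show ?thesis
  proof (cases "e < k")
    case True
    have "{d. d < k \<and> k \<le> a d + e} \<subseteq> {k-e..<k}"
      using Valid_D(2)[OF v] by (auto, meson add_le_mono1 le_diff_conv le_trans)
    then have "card {d. d < k \<and> k \<le> a d + e} \<le> card {k-e..<k}" by (intro card_mono) auto
    then show ?thesis using True by (simp add: Phi_def)
  qed (simp add: Phi_def)
qed

lemma Phi_Valid: "a \<in> Valid k \<Longrightarrow> Phi k a \<in> Valid k"
proof -
  assume v: "a \<in> Valid k"
  have "Phi k a d1 \<le> Phi k a d2" if "d1 \<le> d2" "d2 < k" for d1 d2
  proof -
    have "{d. d < k \<and> k \<le> a d + d1} \<subseteq> {d. d < k \<and> k \<le> a d + d2}" using that by auto
    then show ?thesis using that by (simp add: Phi_def card_mono)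
  qed
  then show ?thesis using Phi_le[OF v] unfolding Valid_def by (auto simp: Phi_def)
qed

lemma Phi_mono: "(\<And>d. a d \<le> b d) \<Longrightarrow> Phi k a e \<le> Phi k b e"
proof -
  assume "\<And>d. a d \<le> b d"
  then have "{d. d < k \<and> k \<le> a d + e} \<subseteq> {d. d < k \<and> k \<le> b d + e}" by (auto intro: le_trans)
  then show ?thesis by (simp add: Phi_def card_mono)
qed

lemma Phi_ge_iff:
  assumes v: "a \<in> Valid k" and m: "1 \<le> m" "m \<le> k" and e: "e < k"
  shows "m \<le> Phi k a e \<longleftrightarrow> k \<le> a (k - m) + e"
proof -
  have "m \<le> card {d. d < k \<and> k \<le> a d + e} \<longleftrightarrow> k - m \<in> {d. d < k \<and> k \<le> a d + e}"
    apply (rule upset_card[OF _ _ m])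
    using Valid_D(3)[OF v] by (auto, meson add_le_mono1 le_trans)
  then show ?thesis using e m by (simp add: Phi_def)
qed

lemma Phi_Phi: assumes v: "a \<in> Valid k" shows "Phi k (Phi k a) = a"
proof
  fix e
  show "Phi k (Phi k a) e = a e"
  proof (cases "e < k")
    case False then show ?thesis using Valid_D(1)[OF v] by (simp add: Phi_def)
  next
    case True
    have ae: "a e \<le> e" using Valid_D(2)[OF v] .
    have "{d'. d' < k \<and> k \<le> Phi k a d' + e} = {k - a e..<k}"
    proof (cases "e = 0")
      case True
      then have "a e = 0" using ae by simp
      have "\<And>d'. d' < k \<Longrightarrow> \<not> k \<le> Phi k a d' + e"
        using True Phi_le[OF v] by (metis add_0_right le_less_trans not_le)
      then show ?thesis using \<open>a e = 0\<close> by auto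
    next
      case False
      have "k \<le> Phi k a d' + e \<longleftrightarrow> k - a e \<le> d'" if "d' < k" for d'
      proof -
        have "k \<le> Phi k a d' + e \<longleftrightarrow> k - e \<le> Phi k a d'" by auto
        also have "\<dots> \<longleftrightarrow> k \<le> a (k - (k - e)) + d'"
          by (rule Phi_ge_iff[OF v]) (use True that in auto)
        also have "\<dots> \<longleftrightarrow> k - a e \<le> d'" using True by auto
        finally show ?thesis .
      qed
      then show ?thesis by auto
    qed
    then show ?thesis using True ae by (simp add: Phi_def)
  qed
qed

lemma Fc_Phi: assumes v: "a \<in> Valid k" shows "Fc k (Phi k a) = Fc k a"
proof -
  have "bij_betw (Phi k) {b \<in> Valid k. \<forall>d. b d \<le> a d} {b \<in> Valid k. \<forall>d. b d \<le> Phi k a d}"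
  proof (rule bij_betw_byWitness[where f'="Phi k"])
    show "\<forall>x\<in>{b \<in> Valid k. \<forall>d. b d \<le> a d}. Phi k (Phi k x) = x" using Phi_Phi by blast
    show "\<forall>x\<in>{b \<in> Valid k. \<forall>d. b d \<le> Phi k a d}. Phi k (Phi k x) = x" using Phi_Phi by blast
    show "Phi k ` {b \<in> Valid k. \<forall>d. b d \<le> a d} \<subseteq> {b \<in> Valid k. \<forall>d. b d \<le> Phi k a d}"
    proof (rule image_subsetI)
      fix b assume b: "b \<in> {b \<in> Valid k. \<forall>d. b d \<le> a d}"
      then have b1: "b \<in> Valid k" and b2: "\<And>d. b d \<le> a d" by auto
      have "Phi k b \<in> Valid k" using Phi_Valid[OF b1] .
      moreover have "\<forall>d. Phi k b d \<le> Phi k a d" using Phi_mono[of b a k, OF b2] by blast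
      ultimately show "Phi k b \<in> {b \<in> Valid k. \<forall>d. b d \<le> Phi k a d}" by blast
    qed
    show "Phi k ` {b \<in> Valid k. \<forall>d. b d \<le> Phi k a d} \<subseteq> {b \<in> Valid k. \<forall>d. b d \<le> a d}"
    proof (rule image_subsetI)
      fix b assume b: "b \<in> {b \<in> Valid k. \<forall>d. b d \<le> Phi k a d}"
      then have b1: "b \<in> Valid k" and b2: "\<And>d. b d \<le> Phi k a d" by auto
      have "Phi k b d \<le> Phi k (Phi k a) d" for d using Phi_mono[of b "Phi k a" k, OF b2] .
      then have "\<forall>d. Phi k b d \<le> a d" unfolding Phi_Phi[OF v] by blast
      moreover have "Phi k b \<in> Valid k" using Phi_Valid[OF b1] .
      ultimately show "Phi k b \<in> {b \<in> Valid k. \<forall>d. b d \<le> a d}" by blast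
    qed
  qed
  then show ?thesis unfolding Fc_def by (rule bij_betw_same_card[symmetric])
qed



definition cntT :: "bool list \<Rightarrow> nat" where "cntT w = length (filter id w)"

definition nonneg :: "bool list \<Rightarrow> bool" where
  "nonneg w \<longleftrightarrow> (\<forall>j \<le> length w. j \<le> 2 * cntT (take j w))"

definition Q :: "nat \<Rightarrow> nat \<Rightarrow> bool list set" where
  "Q u dn = {w. length w = u + dn \<and> cntT w = u \<and> nonneg w}"

fun paths :: "nat \<Rightarrow> nat \<Rightarrow> bool list list" where
  "paths 0 0 = [[]]"
| "paths (Suc u) 0 = map (\<lambda>w. w @ [True]) (paths u 0)"
| "paths 0 (Suc dn) = []"
| "paths (Suc u) (Suc dn) = (if Suc dn \<le> Suc u then
      map (\<lambda>w. w @ [True]) (paths u (Suc dn)) @ map (\<lambda>w. w @ [False]) (paths (Suc u) dn) else [])"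

lemma nonneg_snoc: "nonneg (w @ [x]) \<Longrightarrow> nonneg w"
  unfolding nonneg_def by (metis le_SucI length_append_singleton take_append take_eq_Nil2 append_Nil2 diff_is_0_eq')

lemma nonneg_full: "nonneg w \<Longrightarrow> length w \<le> 2 * cntT w"
  unfolding nonneg_def by (metis order_refl take_all)

lemma Q_paths: "w \<in> Q u dn \<Longrightarrow> w \<in> set (paths u dn)"
proof (induction w arbitrary: u dn rule: rev_induct)
  case Nil
  then show ?case by (simp add: Q_def cntT_def)
next
  case (snoc x w)
  have nw: "nonneg w" using snoc.prems nonneg_snoc unfolding Q_def by blast
  have full: "length (w @ [x]) \<le> 2 * cntT (w @ [x])" using snoc.prems nonneg_full unfolding Q_def by blast
  show ?case
  proof (cases x)
    case True
    then obtain u' where u: "u = Suc u'" using snoc.prems by (cases u) (auto simp: Q_def cntT_def)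
    have "w \<in> Q u' dn" using snoc.prems u True nw by (auto simp: Q_def cntT_def)
    then have w: "w \<in> set (paths u' dn)" using snoc.IH by blast
    show ?thesis
    proof (cases dn)
      case 0 then show ?thesis using w u True by auto
    next
      case (Suc dn')
      have "dn \<le> u" using full snoc.prems by (auto simp: Q_def)
      then show ?thesis using w u True Suc by auto
    qed
  next
    case False
    have cw: "cntT (w @ [x]) = cntT w" using False by (simp add: cntT_def)
    have "cntT w \<le> length w" by (simp add: cntT_def length_filter_le)
    then have "dn \<noteq> 0" using snoc.prems cw by (auto simp: Q_def)
    then obtain dn' where d: "dn = Suc dn'" by (cases dn) auto
    have "w \<in> Q u dn'" using snoc.prems d cw nw by (auto simp: Q_def)
    then have w: "w \<in> set (paths u dn')" using snoc.IH by blast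
    have "dn \<le> u" using full snoc.prems by (auto simp: Q_def)
    then obtain u' where u: "u = Suc u'" using d by (cases u) auto
    show ?thesis using w u d False \<open>dn \<le> u\<close> by auto
  qed
qed

lemma paths_len0: "length (paths u 0) = 1"
  by (induction u) auto

lemma paths_len:
  "1 \<le> dn \<Longrightarrow> dn \<le> u + 1 \<Longrightarrow> length (paths u dn) + ((u + dn) choose (dn - 1)) = ((u + dn) choose dn)"
proof (induction u dn rule: paths.induct)
  case (3 dn)
  then show ?case by auto
next
  case (4 u dn)
  show ?case
  proof (cases "Suc dn \<le> Suc u")
    case True
    have l: "length (paths (Suc u) (Suc dn)) = length (paths u (Suc dn)) + length (paths (Suc u) dn)"
      using True by simp
    have i1: "length (paths u (Suc dn)) + ((u + Suc dn) choose dn) = ((u + Suc dn) choose (Suc dn))"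
      using "4.IH"(1)[OF True] True by simp
    have p1: "(Suc (u + Suc dn) choose Suc dn) = ((u + Suc dn) choose dn) + ((u + Suc dn) choose Suc dn)"
      by simp
    show ?thesis
    proof (cases dn)
      case 0
      have "length (paths (Suc u) dn) = 1" using 0 paths_len0 by simp
      then show ?thesis using l i1 p1 0 by simp
    next
      case (Suc dn')
      have i2: "length (paths (Suc u) dn) + ((Suc u + dn) choose dn') = ((Suc u + dn) choose dn)"
        using "4.IH"(2)[OF True] Suc True by simp
      have p2: "(Suc (u + Suc dn) choose dn) = ((u + Suc dn) choose dn') + ((u + Suc dn) choose dn)"
        using Suc by simp
      show ?thesis using l i1 i2 p1 p2 Suc by simp
    qed
  next
    case False
    then have "dn = Suc u" using "4.prems" by simp
    then show ?thesis using False binomial_symmetric[of "Suc u" "Suc u + Suc dn"] by simp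
  qed
qed auto

lemma paths_empty: "u < dn \<Longrightarrow> paths u dn = []"
  by (cases u; cases dn) auto

lemma paths_tele: "2 * m \<le> k \<Longrightarrow> (\<Sum>dn\<le>m. length (paths (k - dn) dn)) = (k choose m)"
proof (induction m)
  case 0
  then show ?case by (simp add: paths_len0)
next
  case (Suc m)
  have "length (paths (k - Suc m) (Suc m)) + ((k - Suc m + Suc m) choose (Suc m - 1)) = ((k - Suc m + Suc m) choose Suc m)"
    by (rule paths_len) (use Suc.prems in auto)
  moreover have "k - Suc m + Suc m = k" using Suc.prems by simp
  ultimately show ?case using Suc by simp
qed

lemma catalan_id: "(Suc k) * length (paths k k) = ((2 * k) choose k)"
proof (cases k)
  case 0 then show ?thesis by simp
next
  case (Suc k')
  have h: "length (paths k k) + ((2*k) choose (k - 1)) = ((2*k) choose k)"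
    using paths_len[of k k] Suc by (simp add: mult_2)
  have "(Suc k) * ((2*k) choose (k - 1)) = k * ((2*k) choose k)"
    using Suc by (smt (verit) Suc_1 Suc_pred binomial_absorb_comp diff_Suc_1
    diff_Suc_eq_diff_pred mult.commute mult_numeral_1_right numerals(1)
    right_diff_distrib' times_binomial_minus1_eq zero_less_Suc)
  have "Suc k * length (paths k k) + Suc k * ((2*k) choose (k - 1)) = Suc k * ((2*k) choose k)"
    using h by (metis add_mult_distrib2)
  then show ?thesis using \<open>Suc k * ((2*k) choose (k - 1)) = k * ((2*k) choose k)\<close> by simp
qed




lemma orbit_count:
  assumes "finite A" and "\<forall>x\<in>A. \<phi> x \<in> A \<and> \<phi> (\<phi> x) = x \<and> f (\<phi> x) = f x"
  shows "2 * card (f ` A) \<le> card A + card {x\<in>A. \<phi> x = x}"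
  using assms
proof (induction "card A" arbitrary: A rule: less_induct)
  case less
  have inA: "\<And>y. y \<in> A \<Longrightarrow> \<phi> y \<in> A" and invA: "\<And>y. y \<in> A \<Longrightarrow> \<phi> (\<phi> y) = y"
    and fA: "\<And>y. y \<in> A \<Longrightarrow> f (\<phi> y) = f y" using less.prems(2) by auto
  show ?case
  proof (cases "A = {}")
    case True then show ?thesis by simp
  next
    case False
    then obtain x where x: "x \<in> A" by blast
    show ?thesis
    proof (cases "\<phi> x = x")
      case True
      define A' where "A' = A - {x}"
      have fin: "finite A'" using less.prems(1) A'_def by simp
      have cA: "card A = Suc (card A')" using card.remove[OF less.prems(1) x] A'_def by simp
      have inv: "\<forall>y\<in>A'. \<phi> y \<in> A' \<and> \<phi> (\<phi> y) = y \<and> f (\<phi> y) = f y"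
      proof
        fix y assume y: "y \<in> A'"
        then have yA: "y \<in> A" and yx: "y \<noteq> x" using A'_def by auto
        have "\<phi> y \<noteq> x" using invA[OF yA] True yx by metis
        then show "\<phi> y \<in> A' \<and> \<phi> (\<phi> y) = y \<and> f (\<phi> y) = f y" using inA[OF yA] invA[OF yA] fA[OF yA] A'_def by blast
      qed
      have IH: "2 * card (f ` A') \<le> card A' + card {y\<in>A'. \<phi> y = y}"
        using less.hyps[of A'] cA fin inv by simp
      have "f ` A = insert (f x) (f ` A')" using x A'_def by blast
      then have c1: "card (f ` A) \<le> Suc (card (f ` A'))" using fin by (simp add: card_insert_le_m1 card_insert_if)
      have "{y\<in>A. \<phi> y = y} = insert x {y\<in>A'. \<phi> y = y}" using x True A'_def by blast
      then have "card {y\<in>A. \<phi> y = y} = Suc (card {y\<in>A'. \<phi> y = y})" using fin A'_def by simp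
      then show ?thesis using IH c1 cA by linarith
    next
      case False
      define A' where "A' = A - {x, \<phi> x}"
      have px: "\<phi> x \<in> A" using inA x by blast
      have fin: "finite A'" using less.prems(1) A'_def by simp
      have cA: "card A = card A' + 2"
      proof -
        have "card A' = card A - card {x, \<phi> x}" using A'_def x px less.prems(1) by (simp add: card_Diff_subset)
        moreover have "card {x, \<phi> x} = 2" using False by simp
        moreover have "card {x, \<phi> x} \<le> card A" using x px less.prems(1) by (intro card_mono) auto
        ultimately show ?thesis by linarith
      qed
      have inv: "\<forall>y\<in>A'. \<phi> y \<in> A' \<and> \<phi> (\<phi> y) = y \<and> f (\<phi> y) = f y"
      proof
        fix y assume y: "y \<in> A'"
        then have yA: "y \<in> A" and yx: "y \<noteq> x" "y \<noteq> \<phi> x" using A'_def by auto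
        have "\<phi> y \<noteq> x" using invA[OF yA] yx by metis
        moreover have "\<phi> y \<noteq> \<phi> x" using invA[OF yA] invA[OF x] yx by metis
        ultimately show "\<phi> y \<in> A' \<and> \<phi> (\<phi> y) = y \<and> f (\<phi> y) = f y" using inA[OF yA] invA[OF yA] fA[OF yA] A'_def by blast
      qed
      have IH: "2 * card (f ` A') \<le> card A' + card {y\<in>A'. \<phi> y = y}"
        using less.hyps[of A'] cA fin inv by simp
      have "f ` A = insert (f x) (f ` A')"
      proof
        show "f ` A \<subseteq> insert (f x) (f ` A')" using fA[OF x] A'_def by blast
        show "insert (f x) (f ` A') \<subseteq> f ` A" using x A'_def by blast
      qed
      then have c1: "card (f ` A) \<le> Suc (card (f ` A'))" using fin by (simp add: card_insert_le_m1 card_insert_if)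
      have "{y\<in>A. \<phi> y = y} = {y\<in>A'. \<phi> y = y}" using False A'_def invA[OF x] by auto
      then show ?thesis using IH c1 cA by simp
    qed
  qed
qed

definition Ew :: "nat \<Rightarrow> (nat \<Rightarrow> nat) \<Rightarrow> nat \<Rightarrow> bool list" where
  "Ew k a L = map (\<lambda>j. \<exists>d<k. d + a d = j) [0..<L]"

lemma pos_strict: "a \<in> Valid k \<Longrightarrow> d < d' \<Longrightarrow> d' < k \<Longrightarrow> d + a d < d' + a d'"
  using Valid_D(3)[of a k d d'] by simp

lemma pos_le_iff: "a \<in> Valid k \<Longrightarrow> d < k \<Longrightarrow> d' < k \<Longrightarrow> d' + a d' \<le> d + a d \<longleftrightarrow> d' \<le> d"
  using pos_strict[of a k d' d] pos_strict[of a k d d'] by (cases d' d rule: linorder_cases) auto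

lemma pos_inj: "a \<in> Valid k \<Longrightarrow> inj_on (\<lambda>d. d + a d) {..<k}"
  unfolding inj_on_def
proof (intro ballI impI)
  fix x y assume "a \<in> Valid k" "x \<in> {..<k}" "y \<in> {..<k}" "x + a x = y + a y"
  then show "x = y" using pos_strict[of a k x y] pos_strict[of a k y x] by (cases x y rule: linorder_cases) auto
qed

lemma card_pos: "a \<in> Valid k \<Longrightarrow> card {i. i < j \<and> (\<exists>d<k. d + a d = i)} = card {d. d < k \<and> d + a d < j}"
proof -
  assume v: "a \<in> Valid k"
  have "{i. i < j \<and> (\<exists>d<k. d + a d = i)} = (\<lambda>d. d + a d) ` {d. d < k \<and> d + a d < j}" by auto
  moreover have "inj_on (\<lambda>d. d + a d) {d. d < k \<and> d + a d < j}"
    using pos_inj[OF v] by (rule inj_on_subset) auto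
  ultimately show ?thesis by (simp add: card_image)
qed

lemma card_below: "a \<in> Valid k \<Longrightarrow> d < k \<Longrightarrow> card {d'. d' < k \<and> d' + a d' < Suc (d + a d)} = Suc d"
proof -
  assume v: "a \<in> Valid k" and d: "d < k"
  have "{d'. d' < k \<and> d' + a d' < Suc (d + a d)} = {..d}"
    using pos_le_iff[OF v d] d by (auto simp: less_Suc_eq_le)
  then show ?thesis by simp
qed

lemma pos_agree:
  assumes a: "a \<in> Valid k" and b: "b \<in> Valid k"
    and H: "\<And>i. i < L \<Longrightarrow> (\<exists>d<k. d + a d = i) = (\<exists>d<k. d + b d = i)"
    and d: "d < k" and dL: "d + a d < L"
  shows "a d = b d"
proof -
  have "\<exists>d''<k. d'' + b d'' = d + a d" using H[OF dL] d by blast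
  then obtain d'' where d'': "d'' < k" "d'' + b d'' = d + a d" by blast
  have seteq: "{i. i < Suc (d + a d) \<and> (\<exists>d<k. d + a d = i)} = {i. i < Suc (d + a d) \<and> (\<exists>d<k. d + b d = i)}"
  proof (rule Collect_cong)
    fix i
    show "(i < Suc (d + a d) \<and> (\<exists>d<k. d + a d = i)) = (i < Suc (d + a d) \<and> (\<exists>d<k. d + b d = i))"
    proof (cases "i < Suc (d + a d)")
      case True
      then have "i < L" using dL by linarith
      then show ?thesis using H[of i] True by simp
    qed simp
  qed
  have "Suc d = card {d'. d' < k \<and> d' + a d' < Suc (d + a d)}" using card_below[OF a d] by simp
  also have "\<dots> = card {i. i < Suc (d + a d) \<and> (\<exists>d<k. d + a d = i)}" by (rule card_pos[OF a, symmetric])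
  also have "\<dots> = card {i. i < Suc (d + a d) \<and> (\<exists>d<k. d + b d = i)}" using seteq by simp
  also have "\<dots> = card {d'. d' < k \<and> d' + b d' < Suc (d + a d)}" by (rule card_pos[OF b])
  also have "\<dots> = Suc d''" using card_below[OF b d''(1)] d''(2) by simp
  finally have "Suc d = Suc d''" .
  then show ?thesis using d'' by simp
qed

lemma Ew_take: "j \<le> L \<Longrightarrow> cntT (take j (Ew k a L)) = card {i. i < j \<and> (\<exists>d<k. d + a d = i)}"
proof -
  assume j: "j \<le> L"
  have "take j (Ew k a L) = map (\<lambda>j. \<exists>d<k. d + a d = j) [0..<j]"
    unfolding Ew_def using j by (simp add: take_map min_def)
  moreover have "{i. i < j \<and> map (\<lambda>j. \<exists>d<k. d + a d = j) [0..<j] ! i} = {i. i < j \<and> (\<exists>d<k. d + a d = i)}"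
    by (rule Collect_cong) auto
  ultimately show ?thesis by (simp add: cntT_def length_filter_conv_card)
qed

lemma Ew_nonneg:
  assumes v: "a \<in> Valid k" and L: "L \<le> 2 * k"
  shows "nonneg (Ew k a L)"
  unfolding nonneg_def
proof (intro allI impI)
  fix j assume j: "j \<le> length (Ew k a L)"
  then have jL: "j \<le> L" by (simp add: Ew_def)
  have "{..<(j+1) div 2} \<subseteq> {d. d < k \<and> d + a d < j}"
  proof
    fix d assume "d \<in> {..<(j+1) div 2}"
    then have "2 * d < j" by auto
    moreover have "a d \<le> d" using Valid_D(2)[OF v] .
    ultimately show "d \<in> {d. d < k \<and> d + a d < j}" using jL L by auto
  qed
  then have "card {..<(j+1) div 2} \<le> card {d. d < k \<and> d + a d < j}"
    by (intro card_mono) auto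
  then have "(j+1) div 2 \<le> card {d. d < k \<and> d + a d < j}" by simp
  then show "j \<le> 2 * cntT (take j (Ew k a L))"
    using Ew_take[OF jL] card_pos[OF v] by simp
qed

lemma Ew_Q: assumes v: "a \<in> Valid k" shows "Ew k a (2*k) \<in> Q k k"
proof -
  have "cntT (Ew k a (2*k)) = card {d. d < k \<and> d + a d < 2*k}"
    using Ew_take[of "2*k" "2*k" k a] card_pos[OF v] by (simp add: Ew_def)
  also have "{d. d < k \<and> d + a d < 2*k} = {..<k}"
  proof -
    have "d + a d < 2*k" if "d < k" for d using Valid_D(2)[OF v, of d] that by linarith
    then show ?thesis by auto
  qed
  finally show ?thesis using Ew_nonneg[OF v] by (simp add: Q_def Ew_def)
qed

lemma Ew_inj: assumes v: "a \<in> Valid k" "b \<in> Valid k" and e: "Ew k a L = Ew k b L"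
  shows "\<And>i. i < L \<Longrightarrow> (\<exists>d<k. d + a d = i) = (\<exists>d<k. d + b d = i)"
proof -
  fix i assume "i < L"
  moreover have "Ew k a L ! i = Ew k b L ! i" using e by simp
  ultimately show "(\<exists>d<k. d + a d = i) = (\<exists>d<k. d + b d = i)"
    unfolding Ew_def by simp
qed

lemma card_Valid: "card (Valid k) \<le> length (paths k k)"
proof -
  have "inj_on (\<lambda>a. Ew k a (2*k)) (Valid k)"
  proof (rule inj_onI)
    fix a b assume a: "a \<in> Valid k" and b: "b \<in> Valid k" and e: "Ew k a (2*k) = Ew k b (2*k)"
    show "a = b"
    proof
      fix d show "a d = b d"
      proof (cases "d < k")
        case True
        have "d + a d < 2 * k" using Valid_D(2)[OF a, of d] True by linarith
        then show ?thesis using pos_agree[OF a b Ew_inj[OF a b e] True] by blast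
      next
        case False then show ?thesis using Valid_D(1)[OF a] Valid_D(1)[OF b] by simp
      qed
    qed
  qed
  moreover have "(\<lambda>a. Ew k a (2*k)) ` Valid k \<subseteq> set (paths k k)" using Ew_Q Q_paths by blast
  ultimately have "card (Valid k) \<le> card (set (paths k k))" by (rule card_inj_on_le) simp
  also have "\<dots> \<le> length (paths k k)" by (rule card_length)
  finally show ?thesis .
qed

lemma card_Fix: "card {a \<in> Valid k. Phi k a = a} \<le> (k choose (k div 2))"
proof -
  let ?B = "\<Union>dn\<in>{..k div 2}. set (paths (k - dn) dn)"
  have "inj_on (\<lambda>a. Ew k a k) {a \<in> Valid k. Phi k a = a}"
  proof (rule inj_onI)
    fix a b assume a': "a \<in> {a \<in> Valid k. Phi k a = a}" and b': "b \<in> {a \<in> Valid k. Phi k a = a}"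
      and e: "Ew k a k = Ew k b k"
    have a: "a \<in> Valid k" and fa: "Phi k a = a" using a' by auto
    have b: "b \<in> Valid k" and fb: "Phi k b = b" using b' by auto
    have H: "\<And>d. d < k \<Longrightarrow> d + a d < k \<Longrightarrow> a d = b d"
      by (rule pos_agree[OF a b Ew_inj[OF a b e]])
    have H'': "\<And>d. d < k \<Longrightarrow> d + b d < k \<Longrightarrow> b d = a d"
      by (rule pos_agree[OF b a Ew_inj[OF b a e[symmetric]]])
    have H': "\<And>d. d < k \<Longrightarrow> d + b d < k \<Longrightarrow> a d = b d"
      using H'' by (metis)
    show "a = b"
    proof
      fix d show "a d = b d"
      proof (cases "d < k")
        case False then show ?thesis using Valid_D(1)[OF a] Valid_D(1)[OF b] by simp
      next
        case True
        show ?thesis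
        proof (cases "d + a d < k \<or> d + b d < k")
          case True' : True
          then show ?thesis using H H' True by blast
        next
          case False
          have "{e. e < k \<and> k \<le> a e + d} = {e. e < k \<and> k \<le> b e + d}"
          proof (intro Collect_cong conj_cong refl)
            fix e assume e: "e < k"
            show "k \<le> a e + d \<longleftrightarrow> k \<le> b e + d"
            proof (cases "e + a e < k \<or> e + b e < k")
              case True
              then have "a e = b e" using H H' e by blast
              then show ?thesis by simp
            next
              case False': False
              have "k \<le> a e + d"
              proof (cases "e \<le> d")
                case True then show ?thesis using False' by linarith
              next
                case ff: False
                then have "a d \<le> a e" using Valid_D(3)[OF a, of d e] e by simp
                then show ?thesis using False by linarith
              qed
              moreover have "k \<le> b e + d"
              proof (cases "e \<le> d")
                case True then show ?thesis using False' by linarith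
              next
                case ff: False
                then have "b d \<le> b e" using Valid_D(3)[OF b, of d e] e by simp
                then show ?thesis using False by linarith
              qed
              ultimately show ?thesis by simp
            qed
          qed
          then have "Phi k a d = Phi k b d" using True by (simp add: Phi_def)
          then show ?thesis using fa fb by metis
        qed
      qed
    qed
  qed
  moreover have "(\<lambda>a. Ew k a k) ` {a \<in> Valid k. Phi k a = a} \<subseteq> ?B"
  proof
    fix w assume "w \<in> (\<lambda>a. Ew k a k) ` {a \<in> Valid k. Phi k a = a}"
    then obtain a where a: "a \<in> Valid k" and w: "w = Ew k a k" by blast
    have nn: "nonneg w" using Ew_nonneg[OF a] w by simp
    have lw: "length w = k" using w by (simp add: Ew_def)
    have "k \<le> 2 * cntT w" using nonneg_full[OF nn] lw by simp
    moreover have "cntT w \<le> k" using lw by (metis cntT_def length_filter_le)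
    ultimately have "w \<in> Q (k - (k - cntT w)) (k - cntT w)" and "k - cntT w \<le> k div 2"
      using nn lw by (auto simp: Q_def)
    then show "w \<in> ?B" using Q_paths by blast
  qed
  ultimately have "card {a \<in> Valid k. Phi k a = a} \<le> card ?B" by (rule card_inj_on_le) simp
  also have "\<dots> \<le> (\<Sum>dn\<le>k div 2. card (set (paths (k - dn) dn)))" by (rule card_UN_le) simp
  also have "\<dots> \<le> (\<Sum>dn\<le>k div 2. length (paths (k - dn) dn))" by (intro sum_mono card_length)
  also have "\<dots> = (k choose (k div 2))" by (rule paths_tele) simp
  finally show ?thesis .
qed

theorem comb_bound: "2 * card (Fc k ` Valid k) \<le> length (paths k k) + (k choose (k div 2))"
proof -
  have "2 * card (Fc k ` Valid k) \<le> card (Valid k) + card {a \<in> Valid k. Phi k a = a}"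
    by (rule orbit_count[OF finite_Valid]) (simp add: Phi_Valid Phi_Phi Fc_Phi)
  then show ?thesis using card_Valid card_Fix by (meson add_mono le_trans)
qed




lemma clade_anti: "i \<le> j \<Longrightarrow> clade t (take j c) \<subseteq> clade t (take i c)"
  using desc_take[of i j c] clade_append unfolding desc_def by metis

lemma partA:
  assumes cG: "caterpillar G" and cS: "caterpillar S"
    and dG: "distinct (leaves G)" and dS: "distinct (leaves S)"
    and lG: "length (leaves G) = n" and lS: "length (leaves S) = n"
    and eq: "set (leaves G) = set (leaves S)"
  shows "\<exists>M \<in> Valid (n - 1). card (coalescent_histories G S) = Fc (n - 1) M"
proof -
  obtain cg where cg: "cat G cg" using cG unfolding caterpillar_def cat_def by blast
  obtain cs where cs: "cat S cs" using cS unfolding caterpillar_def cat_def by blast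
  interpret g: cat G cg by (rule cg)
  interpret s: cat S cs by (rule cs)
  define k where "k = n - 1"
  have lcg: "length cg + 1 = k" using g.n_eq lG k_def by simp
  have lcs: "length cs + 1 = k" using s.n_eq lS k_def by simp
  define CG where "CG d = clade G (take d cg)" for d
  define CS where "CS e = clade S (take e cs)" for e
  have cardG: "d < k \<Longrightarrow> card (CG d) = n - d" for d
    unfolding CG_def using g.card_clade[OF dG, of d] lG lcg by simp
  have cardS: "e < k \<Longrightarrow> card (CS e) = n - e" for e
    unfolding CS_def using s.card_clade[OF dS, of e] lS lcs by simp
  have G0: "CG d \<subseteq> CS 0" for d
  proof -
    have "CG d \<subseteq> clade G []" unfolding CG_def using clade_anti[of 0 d G cg] by simp
    then show ?thesis unfolding CS_def using eq by (simp add: clade_root)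
  qed
  have kpos: "0 < k" using lcg by simp
  define M where "M d = (if d < k then Max {e. e < k \<and> CG d \<subseteq> CS e} else 0)" for d
  have Mle: "e \<le> M d \<longleftrightarrow> CG d \<subseteq> CS e" if d: "d < k" and e: "e < k" for d e
  proof -
    let ?E = "{e. e < k \<and> CG d \<subseteq> CS e}"
    have fin: "finite ?E" by simp
    have ne: "0 \<in> ?E" using G0 kpos by simp
    have "?E \<noteq> {}" using ne by blast
    then have "Max ?E \<in> ?E" using fin by (rule Max_in[rotated])
    then have Min: "M d \<in> ?E" unfolding M_def using d by simp
    show ?thesis
    proof
      assume "e \<le> M d"
      then have "CS (M d) \<subseteq> CS e" unfolding CS_def by (rule clade_anti)
      then show "CG d \<subseteq> CS e" using Min by auto
    next
      assume "CG d \<subseteq> CS e"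
      then have "e \<in> ?E" using e by simp
      then show "e \<le> M d" unfolding M_def using d fin by simp
    qed
  qed
  have Mk: "M d < k" if "d < k" for d
  proof -
    have "{e. e < k \<and> CG d \<subseteq> CS e} \<noteq> {}" using G0 kpos by blast
    then have "Max {e. e < k \<and> CG d \<subseteq> CS e} \<in> {e. e < k \<and> CG d \<subseteq> CS e}" by (rule Max_in[rotated]) simp
    then have "M d \<in> {e. e < k \<and> CG d \<subseteq> CS e}" unfolding M_def using that by simp
    then show ?thesis by simp
  qed
  have Md: "M d \<le> d" for d
  proof (cases "d < k")
    case True
    have "CG d \<subseteq> CS (M d)" using Mle[OF True Mk[OF True]] by simp
    then have "card (CG d) \<le> card (CS (M d))" by (intro card_mono) (auto simp: CS_def clade_def split: option.splits)
    then show ?thesis using cardG[OF True] cardS[OF Mk[OF True]] lG True k_def by simp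
  qed (simp add: M_def)
  have Mmono: "M d1 \<le> M d2" if "d1 \<le> d2" "d2 < k" for d1 d2
  proof -
    have d1: "d1 < k" using that by simp
    have "CG d2 \<subseteq> CG d1" unfolding CG_def by (rule clade_anti) (rule that(1))
    also have "\<dots> \<subseteq> CS (M d1)" using Mle[OF d1 Mk[OF d1]] by simp
    finally show ?thesis using Mle[OF that(2) Mk[OF d1]] by simp
  qed
  have MV: "M \<in> Valid k" unfolding Valid_def using Md Mmono by (auto simp: M_def)
  let ?H = "coalescent_histories G S"
  let ?T = "{b \<in> Valid k. \<forall>d. b d \<le> M d}"
  define Psi where "Psi h = (\<lambda>d. if d < k then length (h (take d cg)) else 0)" for h :: "bool list \<Rightarrow> bool list"
  define Psi' where "Psi' a = (\<lambda>v. if v \<in> internal_nodes G then take (a (length v)) cs else undefined)" for a :: "nat \<Rightarrow> nat"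
  have IG: "v \<in> internal_nodes G \<longleftrightarrow> (\<exists>i < k. v = take i cg)" for v
    using g.int_iff lcg by (metis Suc_eq_plus1 less_Suc_eq_le)
  have IS: "w \<in> internal_nodes S \<longleftrightarrow> (\<exists>i < k. w = take i cs)" for w
    using s.int_iff lcs by (metis Suc_eq_plus1 less_Suc_eq_le)
  have lenG: "i < k \<Longrightarrow> length (take i cg) = i" for i using lcg by simp
  have lenS: "i < k \<Longrightarrow> length (take i cs) = i" for i using lcs by simp
  have hform: "h v = take (length (h v)) cs \<and> length (h v) < k" if "h \<in> ?H" "v \<in> internal_nodes G" for h v
  proof -
    have "h v \<in> internal_nodes S" using that unfolding coalescent_histories_def by auto
    then obtain i where "i < k" "h v = take i cs" using IS by blast
    then show ?thesis using lenS by simp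
  qed
  have bij: "bij_betw Psi ?H ?T"
  proof (rule bij_betw_byWitness[where f'=Psi'])
    show "\<forall>h\<in>?H. Psi' (Psi h) = h"
    proof
      fix h assume h: "h \<in> ?H"
      show "Psi' (Psi h) = h"
      proof
        fix v show "Psi' (Psi h) v = h v"
        proof (cases "v \<in> internal_nodes G")
          case True
          then obtain i where i: "i < k" "v = take i cg" using IG by blast
          then have "length v = i" using lenG by simp
          then show ?thesis using True i hform[OF h True] unfolding Psi'_def Psi_def by simp
        next
          case False
          then show ?thesis using h unfolding Psi'_def coalescent_histories_def PiE_def extensional_def by auto
        qed
      qed
    qed
    show "\<forall>a\<in>?T. Psi (Psi' a) = a"
    proof
      fix a assume a: "a \<in> ?T"
      then have av: "a \<in> Valid k" by simp
      show "Psi (Psi' a) = a"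
      proof
        fix d show "Psi (Psi' a) d = a d"
        proof (cases "d < k")
          case True
          have "take d cg \<in> internal_nodes G" using IG True by blast
          moreover have "a d < k" using Valid_D(2)[OF av, of d] True by simp
          ultimately show ?thesis using True lenG lenS unfolding Psi_def Psi'_def by simp
        next
          case False then show ?thesis using Valid_D(1)[OF av] unfolding Psi_def by simp
        qed
      qed
    qed
    show "Psi ` ?H \<subseteq> ?T"
    proof (rule image_subsetI)
      fix h assume h: "h \<in> ?H"
      have hd: "\<forall>v1\<in>internal_nodes G. \<forall>v2\<in>internal_nodes G. desc v2 v1 \<longrightarrow> desc (h v2) (h v1)"
        and hc: "\<forall>v\<in>internal_nodes G. clade G v \<subseteq> clade S (h v)"
        using h unfolding coalescent_histories_def by auto
      have le: "Psi h d \<le> M d" for d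
      proof (cases "d < k")
        case True
        have v: "take d cg \<in> internal_nodes G" using IG True by blast
        have "CG d \<subseteq> CS (length (h (take d cg)))"
          using hc v hform[OF h v] unfolding CG_def CS_def by metis
        then show ?thesis using Mle[OF True] hform[OF h v] True unfolding Psi_def by simp
      qed (simp add: Psi_def)
      have mono: "Psi h d1 \<le> Psi h d2" if "d1 \<le> d2" "d2 < k" for d1 d2
      proof -
        have v1: "take d1 cg \<in> internal_nodes G" and v2: "take d2 cg \<in> internal_nodes G"
          using g.take_int by auto
        have "desc (h (take d2 cg)) (h (take d1 cg))" using hd v1 v2 desc_take[OF that(1)] by blast
        then show ?thesis using desc_len that unfolding Psi_def by simp
      qed
      have "Psi h d \<le> d" for d using le[of d] Md[of d] by linarith
      then have "Psi h \<in> Valid k" unfolding Valid_def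
        using mono by (auto simp: Psi_def)
      then show "Psi h \<in> ?T" using le by simp
    qed
    show "Psi' ` ?T \<subseteq> ?H"
    proof (rule image_subsetI)
      fix a assume a: "a \<in> ?T"
      then have av: "a \<in> Valid k" and aM: "\<And>d. a d \<le> M d" by auto
      have ak: "a d < k" if "d < k" for d using Valid_D(2)[OF av, of d] that by simp
      have pie: "Psi' a \<in> internal_nodes G \<rightarrow>\<^sub>E internal_nodes S"
        unfolding Psi'_def PiE_def extensional_def using s.take_int by auto
      have cl: "\<forall>v\<in>internal_nodes G. clade G v \<subseteq> clade S (Psi' a v)"
      proof
        fix v assume v: "v \<in> internal_nodes G"
        then obtain i where i: "i < k" "v = take i cg" using IG by blast
        have "CG i \<subseteq> CS (a i)" using Mle[OF i(1) ak[OF i(1)]] aM by simp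
        then show "clade G v \<subseteq> clade S (Psi' a v)" using v i lenG unfolding Psi'_def CG_def CS_def by simp
      qed
      have ds: "\<forall>v1\<in>internal_nodes G. \<forall>v2\<in>internal_nodes G. desc v2 v1 \<longrightarrow> desc (Psi' a v2) (Psi' a v1)"
      proof (intro ballI impI)
        fix v1 v2 assume v1: "v1 \<in> internal_nodes G" and v2: "v2 \<in> internal_nodes G" and d: "desc v2 v1"
        obtain i where i: "i < k" "v1 = take i cg" using IG v1 by blast
        obtain j where j: "j < k" "v2 = take j cg" using IG v2 by blast
        have "i \<le> j" using desc_len[OF d] i j lenG by simp
        then have "a i \<le> a j" using Valid_D(3)[OF av] j(1) by blast
        then have "desc (take (a j) cs) (take (a i) cs)" by (rule desc_take)
        then show "desc (Psi' a v2) (Psi' a v1)" using v1 v2 i j lenG unfolding Psi'_def by simp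
      qed
      show "Psi' a \<in> ?H" unfolding coalescent_histories_def using pie cl ds by blast
    qed
  qed
  then have "card ?H = card ?T" by (rule bij_betw_same_card)
  then show ?thesis using MV unfolding Fc_def k_def by blast
qed


theorem proposition3:
  fixes n :: nat
  assumes "n \<ge> 2"
  shows "real (card (V n)) \<le>
    (1/2) * ((1 / real n) * real ((2*n - 2) choose (n - 1))
             + real ((n - 1) choose ((n - 1) div 2)))"
proof -
  define k where "k = n - 1"
  have nk: "n = k + 1" using assms k_def by simp
  have sub: "V n \<subseteq> Fc k ` Valid k"
  proof
    fix x assume "x \<in> V n"
    then obtain G S where h: "caterpillar G" "caterpillar S" "distinct (leaves G)" "distinct (leaves S)"
      "length (leaves G) = n" "length (leaves S) = n" "set (leaves G) = set (leaves S)"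
      and hx: "card (coalescent_histories G S) = x" unfolding V_def by blast
    obtain M where M: "M \<in> Valid k" "card (coalescent_histories G S) = Fc k M"
      using partA[OF h] unfolding k_def by blast
    have "x = Fc k M" using M(2) hx by simp
    then show "x \<in> Fc k ` Valid k" using M(1) by (rule image_eqI)
  qed
  have c1: "card (V n) \<le> card (Fc k ` Valid k)"
    using sub finite_Valid by (intro card_mono) auto
  have c2: "2 * card (Fc k ` Valid k) \<le> length (paths k k) + (k choose (k div 2))"
    by (rule comb_bound)
  have c3: "Suc k * length (paths k k) = ((2*k) choose k)" by (rule catalan_id)
  have r3: "real (length (paths k k)) = real ((2*k) choose k) / real (k + 1)"
  proof -
    have "real (Suc k) * real (length (paths k k)) = real ((2*k) choose k)"
      using c3 by (metis of_nat_mult)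
    then show ?thesis by (simp add: field_simps)
  qed
  have "real (card (V n)) \<le> real (card (Fc k ` Valid k))" using c1 by simp
  also have "\<dots> \<le> (1/2) * (real (length (paths k k)) + real (k choose (k div 2)))"
    using c2 by (simp add: field_simps) linarith?
  also have "\<dots> = (1/2) * ((1 / real n) * real ((2*n - 2) choose (n - 1))
             + real ((n - 1) choose ((n - 1) div 2)))"
  proof -
    have "2*n - 2 = 2*k" "n - 1 = k" using nk by auto
    then show ?thesis using r3 nk by (simp add: field_simps)
  qed
  finally show ?thesis .
qed

end
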